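(* Let $(\mathscr T_t)_{t\ge0}$ be a Crump-Mode-Jagers process with generic waiting-time sequence $(X_j)_{j\in\mathbb N}$ of $[0,\infty]$-valued random variables as in the context, assume the $X_j$ are mutually independent, and assume that for some $\alpha>0$, \[\sum_{j=1}^\infty\mathbb E\Big[e^{-\alpha\sum_{i=1}^jX_i}\Big]<1.\] Then almost surely $|\mathscr T_t|<\infty$ for every $t>0$.
   Context: Ulam–Harris tree: $\mathcal U=\bigcup_{n\ge0}\mathbb N^n$ with $\mathbb N^0=\{\varnothing\}$; $u=u_1\cdots u_k$, $uj$ is the $j$-th child of $u$. Let $(X_j)_{j\in\mathbb N}$ be $[0,\infty]$-valued random variables (the value $\infty$ is allowed) and for each $u\in\mathcal U$ let $(X(uj))_{j\in\mathbb N}$ be a copy of $(X_j)_j$, independent over different $u$. Birth times: $\mathcal B(\varnothing)=0$, $\mathcal B(ui)=\mathcal B(u)+\sum_{j=1}^iX(uj)$; $\mathscr T_t=\{x\in\mathcal U:\mathcal B(x)\le t\}$. *)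

theory Defs
  imports "HOL-Probability.Probability"
begin

text \<open>Ulam-Harris nodes are lists of natural numbers; child indices are 0-based,
  so child index i corresponds to the (i+1)-th child of the paper.
  X p j is the waiting time X(p(j+1)) of the paper.\<close>

primrec birth_from :: "(nat list \<Rightarrow> nat \<Rightarrow> 'a \<Rightarrow> ennreal) \<Rightarrow> nat list \<Rightarrow> nat list \<Rightarrow> 'a \<Rightarrow> ennreal" where
  "birth_from X p [] \<omega> = 0"
| "birth_from X p (i # r) \<omega> = (\<Sum>j\<le>i. X p j \<omega>) + birth_from X (p @ [i]) r \<omega>"

definition birth :: "(nat list \<Rightarrow> nat \<Rightarrow> 'a \<Rightarrow> ennreal) \<Rightarrow> nat list \<Rightarrow> 'a \<Rightarrow> ennreal" where
  "birth X u \<omega> = birth_from X [] u \<omega>"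

definition born_by :: "(nat list \<Rightarrow> nat \<Rightarrow> 'a \<Rightarrow> ennreal) \<Rightarrow> real \<Rightarrow> 'a \<Rightarrow> nat list set" where
  "born_by X t \<omega> = {u. birth X u \<omega> \<le> ennreal t}"

definition exp_neg :: "real \<Rightarrow> ennreal \<Rightarrow> real" where
  "exp_neg a x = (if x = \<infinity> then 0 else exp (- a * enn2real x))"

end

theory Submission imports Defs begin

lemma birth_from_cong:
  "(\<And>k j. k < length r \<Longrightarrow> X (p @ take k r) j \<omega> = X' (p @ take k r) j \<omega>') \<Longrightarrow>
   birth_from X p r \<omega> = birth_from X' p r \<omega>'"
proof (induction r arbitrary: p)
  case Nil then show ?case by simp
next
  case (Cons i r)
  have a: "X p j \<omega> = X' p j \<omega>'" for j using Cons.prems[of 0 j] by simp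
  have b: "birth_from X (p@[i]) r \<omega> = birth_from X' (p@[i]) r \<omega>'"
    by (rule Cons.IH) (use Cons.prems in \<open>fastforce dest: Cons.prems[of "Suc _"]\<close>)
  show ?case using a b by simp
qed

lemma birth_from_snoc:
  "birth_from X p (r @ [i]) \<omega> = birth_from X p r \<omega> + (\<Sum>j\<le>i. X (p @ r) j \<omega>)"
  by (induction r arbitrary: p) (simp_all add: add.assoc)

lemma exp_neg_add: "exp_neg a (x + y) = exp_neg a x * exp_neg a y"
proof (cases "x = \<infinity> \<or> y = \<infinity>")
  case True then show ?thesis by (auto simp: exp_neg_def)
next
  case False
  then have "x < top" "y < top" by (auto simp: top_unique less_top)
  then show ?thesis using False by (simp add: exp_neg_def enn2real_plus exp_add[symmetric] algebra_simps)
qed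

lemma exp_neg_nonneg: "0 \<le> exp_neg a x"
  by (simp add: exp_neg_def)

lemma exp_neg_measurable[measurable]:
  assumes [measurable]: "f \<in> borel_measurable M"
  shows "(\<lambda>x. exp_neg a (f x)) \<in> borel_measurable M"
  unfolding exp_neg_def by measurable

lemma birth_from_measurable:
  assumes "\<And>v j. X v j \<in> borel_measurable M"
  shows "(\<lambda>\<omega>. birth_from X p r \<omega>) \<in> borel_measurable M"
  using assms
proof (induction r arbitrary: p)
  case Nil then show ?case by simp
next
  case (Cons i r)
  have e: "(\<lambda>\<omega>. birth_from X p (i # r) \<omega>) = (\<lambda>\<omega>. (\<Sum>j\<le>i. X p j \<omega>) + birth_from X (p @ [i]) r \<omega>)"
    by simp
  show ?case unfolding e using Cons by (intro borel_measurable_add borel_measurable_sum) auto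
qed

lemma birth_from_measurable_Pi:
  assumes "\<And>k. k < length r \<Longrightarrow> p @ take k r \<in> I"
  shows "(\<lambda>y. birth_from (\<lambda>v j y. y v j) p r y) \<in> borel_measurable (PiM I (\<lambda>_. PiM (UNIV::nat set) (\<lambda>_. (borel::ennreal measure))))"
  using assms
proof (induction r arbitrary: p)
  case Nil then show ?case by simp
next
  case (Cons i r)
  have pI: "p \<in> I" using Cons.prems[of 0] by simp
  have c: "(\<lambda>y. y p j) \<in> borel_measurable (PiM I (\<lambda>_. PiM (UNIV::nat set) (\<lambda>_. (borel::ennreal measure))))" for j
    using measurable_compose[OF measurable_component_singleton[OF pI] measurable_component_singleton[of j UNIV]]
    by simp
  have ih: "(\<lambda>y. birth_from (\<lambda>v j y. y v j) (p@[i]) r y) \<in> borel_measurable (PiM I (\<lambda>_. PiM (UNIV::nat set) (\<lambda>_. (borel::ennreal measure))))"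
    by (rule Cons.IH) (use Cons.prems in \<open>fastforce dest: Cons.prems[of "Suc _"]\<close>)
  show ?case using c ih by simp
qed


lemma main_bound:
  fixes M :: "'a measure"
    and Xg :: "nat \<Rightarrow> 'a \<Rightarrow> ennreal"
    and X :: "nat list \<Rightarrow> nat \<Rightarrow> 'a \<Rightarrow> ennreal"
  assumes P: "prob_space M"
    and Xgm: "\<And>j. Xg j \<in> borel_measurable M"
    and Xm: "\<And>u j. X u j \<in> borel_measurable M"
    and D: "\<And>u. distr M (PiM UNIV (\<lambda>_. borel)) (\<lambda>\<omega> j. X u j \<omega>)
              = distr M (PiM UNIV (\<lambda>_. borel)) (\<lambda>\<omega> j. Xg j \<omega>)"
    and I: "prob_space.indep_vars M (\<lambda>_. PiM UNIV (\<lambda>_. borel)) (\<lambda>u \<omega> j. X u j \<omega>) UNIV"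
  shows "(\<integral>\<^sup>+\<omega>. ennreal (exp_neg a (birth X (u @ [i]) \<omega>)) \<partial>M) =
         (\<integral>\<^sup>+\<omega>. ennreal (exp_neg a (birth X u \<omega>)) \<partial>M) *
         (\<integral>\<^sup>+ \<omega>. ennreal (exp_neg a (\<Sum>j\<le>i. Xg j \<omega>)) \<partial>M)"
proof -
  interpret prob_space M by (rule P)
  define E where "E = PiM (UNIV::nat set) (\<lambda>_. (borel::ennreal measure))"
  define Y where "Y v \<omega> = (\<lambda>j. X v j \<omega>)" for v \<omega>
  define Pr where "Pr = {v. \<exists>k<length u. v = take k u}"
  have uP: "u \<notin> Pr"
  proof
    assume "u \<in> Pr"
    then obtain k where k: "k < length u" "take k u = u" unfolding Pr_def mem_Collect_eq by (elim exE conjE) (rule that, assumption, rule sym)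
    have "length (take k u) < length u" using k(1) by simp
    then show False using k(2) by simp
  qed
  have ind: "indep_var (PiM Pr (\<lambda>_. E)) (\<lambda>\<omega>. restrict (\<lambda>v. Y v \<omega>) Pr)
                       (PiM {u} (\<lambda>_. E)) (\<lambda>\<omega>. restrict (\<lambda>v. Y v \<omega>) {u})"
    by (rule indep_var_restrict) (use I uP in \<open>auto simp: E_def Y_def\<close>)
  define \<Phi> where "\<Phi> y = ennreal (exp_neg a (birth_from (\<lambda>v j y. y v j) [] u y))"
    for y :: "nat list \<Rightarrow> nat \<Rightarrow> ennreal"
  define \<Psi> where "\<Psi> y = ennreal (exp_neg a (\<Sum>j\<le>i. y u j))"
    for y :: "nat list \<Rightarrow> nat \<Rightarrow> ennreal"
  have \<Phi>m: "\<Phi> \<in> borel_measurable (PiM Pr (\<lambda>_. E))"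
  proof -
    have "(\<lambda>y. birth_from (\<lambda>v j y. y v j) [] u y) \<in> borel_measurable (PiM Pr (\<lambda>_. E))"
      unfolding E_def by (rule birth_from_measurable_Pi) (auto simp: Pr_def)
    then show ?thesis unfolding \<Phi>_def by measurable
  qed
  have \<Psi>m: "\<Psi> \<in> borel_measurable (PiM {u} (\<lambda>_. E))"
  proof -
    have c: "(\<lambda>y. y u j) \<in> borel_measurable (PiM {u} (\<lambda>_. E))" for j
      using measurable_compose[OF measurable_component_singleton[of u "{u}"] measurable_component_singleton[of j UNIV]]
      by (simp add: E_def)
    have "(\<lambda>y. (\<Sum>j\<le>i. y u j)) \<in> borel_measurable (PiM {u} (\<lambda>_. E))"
      using c by (intro borel_measurable_sum) auto
    then show ?thesis unfolding \<Psi>_def by measurable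
  qed
  have ind2: "indep_var borel (\<Phi> \<circ> (\<lambda>\<omega>. restrict (\<lambda>v. Y v \<omega>) Pr)) borel (\<Psi> \<circ> (\<lambda>\<omega>. restrict (\<lambda>v. Y v \<omega>) {u}))"
    by (rule indep_var_compose[OF ind \<Phi>m \<Psi>m])
  have cb: "case_bool (borel::ennreal measure) borel = (\<lambda>_. borel)"
    by (rule ext) (simp split: bool.split)
  have ind3: "indep_vars (\<lambda>_. borel) (case_bool (\<Phi> \<circ> (\<lambda>\<omega>. restrict (\<lambda>v. Y v \<omega>) Pr)) (\<Psi> \<circ> (\<lambda>\<omega>. restrict (\<lambda>v. Y v \<omega>) {u}))) UNIV"
    using ind2 unfolding indep_var_def cb .
  have prodeq: "(\<integral>\<^sup>+\<omega>. \<Phi> (restrict (\<lambda>v. Y v \<omega>) Pr) * \<Psi> (restrict (\<lambda>v. Y v \<omega>) {u}) \<partial>M) =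
     (\<integral>\<^sup>+\<omega>. \<Phi> (restrict (\<lambda>v. Y v \<omega>) Pr) \<partial>M) * (\<integral>\<^sup>+\<omega>. \<Psi> (restrict (\<lambda>v. Y v \<omega>) {u}) \<partial>M)"
    using indep_vars_nn_integral[OF _ ind3] by (simp add: UNIV_bool mult.commute comp_def)
  have e1: "\<Phi> (restrict (\<lambda>v. Y v \<omega>) Pr) = ennreal (exp_neg a (birth X u \<omega>))" for \<omega>
  proof -
    have "birth X u \<omega> = birth_from (\<lambda>v j y. y v j) [] u (restrict (\<lambda>v. Y v \<omega>) Pr)"
      unfolding birth_def by (rule birth_from_cong) (auto simp: Pr_def Y_def)
    then show ?thesis by (simp add: \<Phi>_def)
  qed
  have e2: "\<Psi> (restrict (\<lambda>v. Y v \<omega>) {u}) = ennreal (exp_neg a (\<Sum>j\<le>i. X u j \<omega>))" for \<omega>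
    by (simp add: \<Psi>_def Y_def)
  have e3: "ennreal (exp_neg a (birth X (u @ [i]) \<omega>)) =
     ennreal (exp_neg a (birth X u \<omega>)) * ennreal (exp_neg a (\<Sum>j\<le>i. X u j \<omega>))" for \<omega>
    by (simp add: birth_def birth_from_snoc exp_neg_add ennreal_mult exp_neg_nonneg)
  define g where "g y = ennreal (exp_neg a (\<Sum>j\<le>i. y j))" for y :: "nat \<Rightarrow> ennreal"
  have gm: "g \<in> borel_measurable E"
  proof -
    have "(\<lambda>y. (\<Sum>j\<le>i. y j)) \<in> borel_measurable E"
      unfolding E_def by (intro borel_measurable_sum) auto
    then show ?thesis unfolding g_def by measurable
  qed
  have Ym: "(\<lambda>\<omega> j. X v j \<omega>) \<in> measurable M E" for v
    unfolding E_def by (rule measurable_PiM_single') (auto simp: Xm)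
  have Ygm: "(\<lambda>\<omega> j. Xg j \<omega>) \<in> measurable M E"
    unfolding E_def by (rule measurable_PiM_single') (auto simp: Xgm)
  have e4: "(\<integral>\<^sup>+\<omega>. ennreal (exp_neg a (\<Sum>j\<le>i. X u j \<omega>)) \<partial>M) = (\<integral>\<^sup>+ \<omega>. ennreal (exp_neg a (\<Sum>j\<le>i. Xg j \<omega>)) \<partial>M)"
  proof -
    have "(\<integral>\<^sup>+\<omega>. ennreal (exp_neg a (\<Sum>j\<le>i. X u j \<omega>)) \<partial>M) = (\<integral>\<^sup>+\<omega>. g (\<lambda>j. X u j \<omega>) \<partial>M)"
      by (simp add: g_def)
    also have "\<dots> = (\<integral>\<^sup>+y. g y \<partial>distr M E (\<lambda>\<omega> j. X u j \<omega>))"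
      by (intro nn_integral_distr[symmetric] Ym) (simp add: gm)
    also have "\<dots> = (\<integral>\<^sup>+y. g y \<partial>distr M E (\<lambda>\<omega> j. Xg j \<omega>))"
      using D[of u] by (simp add: E_def)
    also have "\<dots> = (\<integral>\<^sup>+\<omega>. g (\<lambda>j. Xg j \<omega>) \<partial>M)"
      by (intro nn_integral_distr Ygm) (simp add: gm)
    finally show ?thesis by (simp add: g_def)
  qed
  show ?thesis
    using prodeq unfolding e1 e2 e3 e4 by simp
qed


definition lev :: "nat \<Rightarrow> nat \<Rightarrow> nat list set" where
  "lev n K = {u. length u = n \<and> set u \<subseteq> {..<K}}"

lemma lev_finite: "finite (lev n K)"
proof -
  have "finite {xs. set xs \<subseteq> {..<K} \<and> length xs = n}"
    by (rule finite_lists_length_eq) simp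
  then show ?thesis unfolding lev_def by (simp add: conj_commute)
qed

lemma lev_0: "lev 0 K = {[]}"
  by (auto simp: lev_def)

lemma lev_Suc: "lev (Suc n) K = (\<lambda>(u,i). u @ [i]) ` (lev n K \<times> {..<K})"
proof
  show "lev (Suc n) K \<subseteq> (\<lambda>(u,i). u @ [i]) ` (lev n K \<times> {..<K})"
  proof
    fix w assume "w \<in> lev (Suc n) K"
    then have w: "length w = Suc n" "set w \<subseteq> {..<K}" by (auto simp: lev_def)
    then obtain y ys where "w = ys @ [y]" "length ys = n" by (auto simp: length_Suc_conv_rev)
    with w show "w \<in> (\<lambda>(u,i). u @ [i]) ` (lev n K \<times> {..<K})"
      by (auto simp: lev_def image_iff)
  qed
qed (auto simp: lev_def)

lemma lev_inj: "inj_on (\<lambda>(u,i). u @ [i]) (A \<times> B)"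
  by (auto simp: inj_on_def)

lemma lev_mono: "K \<le> K' \<Longrightarrow> lev n K \<subseteq> lev n K'"
  by (auto simp: lev_def)

lemma level_bound:
  fixes a :: "nat list \<Rightarrow> ennreal" and m :: "nat \<Rightarrow> ennreal"
  assumes a0: "a [] = 1"
    and aS: "\<And>u i. a (u @ [i]) = a u * m i"
  shows "(\<Sum>u\<in>lev n K. a u) \<le> (\<Sum>i. m i) ^ n"
proof (induction n)
  case 0 then show ?case by (simp add: lev_0 a0)
next
  case (Suc n)
  have "(\<Sum>u\<in>lev (Suc n) K. a u) = (\<Sum>p\<in>lev n K \<times> {..<K}. a ((\<lambda>(u,i). u @ [i]) p))"
    unfolding lev_Suc by (rule sum.reindex[OF lev_inj, unfolded comp_def])
  also have "\<dots> = (\<Sum>u\<in>lev n K. \<Sum>i<K. a u * m i)"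
    by (simp add: sum.cartesian_product aS case_prod_beta)
  also have "\<dots> = (\<Sum>u\<in>lev n K. a u * (\<Sum>i<K. m i))"
    by (simp add: sum_distrib_left)
  also have "\<dots> \<le> (\<Sum>u\<in>lev n K. a u * (\<Sum>i. m i))"
    by (intro sum_mono mult_left_mono sum_le_suminf) (auto intro: summableI)
  also have "\<dots> = (\<Sum>u\<in>lev n K. a u) * (\<Sum>i. m i)"
    by (simp add: sum_distrib_right)
  also have "\<dots> \<le> (\<Sum>i. m i) ^ n * (\<Sum>i. m i)"
    by (intro mult_right_mono Suc.IH) simp
  finally show ?case by (simp add: mult.commute)
qed


lemma birth_measurable:
  assumes "\<And>v j. X v j \<in> borel_measurable M"
  shows "(\<lambda>\<omega>. ennreal (exp_neg a (birth X u \<omega>))) \<in> borel_measurable M"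
proof -
  have "(\<lambda>\<omega>. birth X u \<omega>) \<in> borel_measurable M"
    unfolding birth_def by (rule birth_from_measurable[OF assms])
  then show ?thesis by measurable
qed

lemma exists_bound:
  assumes "finite A"
  shows "\<exists>N. A \<subseteq> (\<Union>n<N. lev n N)"
proof -
  define N where "N = (\<Sum>u\<in>A. Suc (length u + sum_list u))"
  have "u \<in> (\<Union>n<N. lev n N)" if "u \<in> A" for u
  proof -
    have le: "Suc (length u + sum_list u) \<le> N"
      unfolding N_def using member_le_sum[of u A "\<lambda>u. Suc (length u + sum_list u)"] assms that by simp
    have "set u \<subseteq> {..<N}"
    proof
      fix x assume "x \<in> set u"
      then have "x \<le> sum_list u" by (auto intro: member_le_sum_list)
      then show "x \<in> {..<N}" using le by simp
    qed
    then show ?thesis using le by (auto simp: lev_def)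
  qed
  then show ?thesis by blast
qed

theorem lemma3p5:
  fixes M :: "'a measure"
    and Xg :: "nat \<Rightarrow> 'a \<Rightarrow> ennreal"
    and X :: "nat list \<Rightarrow> nat \<Rightarrow> 'a \<Rightarrow> ennreal"
    and \<alpha> :: real
  assumes "prob_space M"
    and "\<And>j. Xg j \<in> borel_measurable M"
    and "\<And>u j. X u j \<in> borel_measurable M"
    and "prob_space.indep_vars M (\<lambda>_. borel) Xg UNIV"
    and "\<And>u. distr M (PiM UNIV (\<lambda>_. borel)) (\<lambda>\<omega> j. X u j \<omega>)
              = distr M (PiM UNIV (\<lambda>_. borel)) (\<lambda>\<omega> j. Xg j \<omega>)"
    and "prob_space.indep_vars M (\<lambda>_. PiM UNIV (\<lambda>_. borel)) (\<lambda>u \<omega> j. X u j \<omega>) UNIV"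
    and "\<alpha> > 0"
    and "(\<Sum>j. \<integral>\<^sup>+ \<omega>. ennreal (exp_neg \<alpha> (\<Sum>i\<le>j. Xg i \<omega>)) \<partial>M) < 1"
  shows "AE \<omega> in M. \<forall>t>0. finite (born_by X t \<omega>)"
proof -
  interpret prob_space M by (rule assms(1))
  define ee where "ee u \<omega> = ennreal (exp_neg \<alpha> (birth X u \<omega>))" for u \<omega>
  define a where "a u = (\<integral>\<^sup>+\<omega>. ee u \<omega> \<partial>M)" for u
  define m where "m j = (\<integral>\<^sup>+ \<omega>. ennreal (exp_neg \<alpha> (\<Sum>i\<le>j. Xg i \<omega>)) \<partial>M)" for j
  define mm where "mm = (\<Sum>j. m j)"
  have mm1: "mm < 1" using assms(8) by (simp add: mm_def m_def)
  have eem: "ee u \<in> borel_measurable M" for u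
    unfolding ee_def by (rule birth_measurable[OF assms(3)])
  have a0: "a [] = 1"
    by (simp add: a_def ee_def birth_def exp_neg_def emeasure_space_1)
  have aS: "a (u @ [i]) = a u * m i" for u i
    unfolding a_def ee_def m_def by (rule main_bound[OF assms(1,2,3,5,6)])
  have lb: "(\<Sum>u\<in>lev n K. a u) \<le> mm ^ n" for n K
    unfolding mm_def by (rule level_bound[OF a0 aS])
  define C where "C = (\<Sum>n. mm ^ n)"
  have Cfin: "C < \<infinity>"
  proof -
    define r where "r = enn2real mm"
    have lt: "mm < top" using less_trans[OF mm1 ennreal_one_less_top] .
    have mmr: "mm = ennreal r" unfolding r_def using lt by simp
    have r00: "0 \<le> r" unfolding r_def by simp
    have "ennreal r < 1" using mm1 unfolding mmr .
    then have r01: "r < 1" by simp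
    note r0 = r00 r01
    have "C = (\<Sum>n. ennreal (r ^ n))" unfolding C_def mmr by (intro arg_cong[where f=suminf] ext) (simp add: ennreal_power[OF r00])
    also have "\<dots> = ennreal (\<Sum>n. r ^ n)"
      by (rule suminf_ennreal2) (use r0 in \<open>auto intro: summable_geometric\<close>)
    finally show ?thesis by simp
  qed
  define F where "F N = (\<Union>n<N. lev n N)" for N
  have Ffin: "finite (F N)" for N unfolding F_def by (auto intro: lev_finite)
  define H where "H N \<omega> = (\<Sum>u\<in>F N. ee u \<omega>)" for N \<omega>
  have Hm: "H N \<in> borel_measurable M" for N
    unfolding H_def using eem by (intro borel_measurable_sum) auto
  have Finc: "F N \<subseteq> F (Suc N)" for N
    unfolding F_def using lev_mono[of N "Suc N"] by fastforce
  have Hinc: "incseq H"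
  proof (rule incseq_SucI, rule le_funI)
    fix N \<omega> show "H N \<omega> \<le> H (Suc N) \<omega>"
      unfolding H_def by (rule sum_mono2[OF Ffin Finc]) simp
  qed
  have HI: "(\<integral>\<^sup>+\<omega>. H N \<omega> \<partial>M) \<le> C" for N
  proof -
    have "(\<integral>\<^sup>+\<omega>. H N \<omega> \<partial>M) = (\<Sum>u\<in>F N. a u)"
      unfolding H_def a_def by (rule nn_integral_sum) (use eem in auto)
    also have "\<dots> = (\<Sum>n<N. \<Sum>u\<in>lev n N. a u)"
      unfolding F_def by (rule sum.UNION_disjoint) (auto simp: lev_finite, auto simp: lev_def)
    also have "\<dots> \<le> (\<Sum>n<N. mm ^ n)"
      by (intro sum_mono lb)
    also have "\<dots> \<le> C"
      unfolding C_def by (intro sum_le_suminf) (auto intro: summableI)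
    finally show ?thesis .
  qed
  define G where "G \<omega> = (SUP N. H N \<omega>)" for \<omega>
  have Gm: "G \<in> borel_measurable M" unfolding G_def using Hm by measurable
  have "(\<integral>\<^sup>+\<omega>. G \<omega> \<partial>M) = (SUP N. \<integral>\<^sup>+\<omega>. H N \<omega> \<partial>M)"
    unfolding G_def by (rule nn_integral_monotone_convergence_SUP[OF Hinc Hm])
  also have "\<dots> \<le> C" by (intro SUP_least HI)
  finally have "(\<integral>\<^sup>+\<omega>. G \<omega> \<partial>M) \<noteq> \<infinity>" using Cfin by (auto simp: top_unique)
  then have AEG: "AE \<omega> in M. G \<omega> \<noteq> \<infinity>" by (rule nn_integral_PInf_AE[OF Gm])
  show ?thesis
  proof (rule AE_mp[OF AEG], rule AE_I2, safe)
    fix \<omega> t assume Gf: "G \<omega> \<noteq> \<infinity>" and t: "(0::real) < t"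
    show "finite (born_by X t \<omega>)"
    proof (rule ccontr)
      assume inf: "infinite (born_by X t \<omega>)"
      define c where "c = exp (- \<alpha> * t)"
      have c0: "c > 0" by (simp add: c_def)
      define h where "h = enn2real (G \<omega>)"
      have Glt: "G \<omega> < top" using Gf by (simp add: less_top)
      have h: "G \<omega> = ennreal h" "0 \<le> h" unfolding h_def using Glt by simp_all
      obtain k :: nat where k: "h / c < real k" using reals_Archimedean2 by blast
      obtain A where A: "finite A" "card A = k" "A \<subseteq> born_by X t \<omega>"
        using infinite_arbitrarily_large[OF inf] by blast
      obtain N where N: "A \<subseteq> F N" using exists_bound[OF A(1)] unfolding F_def by blast
      have lowb: "ennreal c \<le> ee u \<omega>" if "u \<in> A" for u
      proof -
        have b: "birth X u \<omega> \<le> ennreal t" using A(3) that by (auto simp: born_by_def)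
        then have bf: "birth X u \<omega> \<noteq> \<infinity>" by (auto simp: top_unique)
        have "enn2real (birth X u \<omega>) \<le> enn2real (ennreal t)"
          by (rule enn2real_mono[OF b]) simp
        then have "enn2real (birth X u \<omega>) \<le> t" using t by simp
        then have "exp (- \<alpha> * t) \<le> exp (- \<alpha> * enn2real (birth X u \<omega>))"
          using assms(7) by simp
        then show ?thesis using bf by (simp add: ee_def exp_neg_def c_def)
      qed
      have "of_nat (card A) * ennreal c \<le> (\<Sum>u\<in>A. ee u \<omega>)"
        by (rule sum_bounded_below) (rule lowb)
      also have "\<dots> \<le> H N \<omega>"
        unfolding H_def by (rule sum_mono2[OF Ffin N]) simp
      also have "\<dots> \<le> G \<omega>" unfolding G_def by (rule SUP_upper) simp
      finally have "ennreal (real k * c) \<le> ennreal h"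
        using A(2) h(1) c0 by (simp add: ennreal_mult ennreal_of_nat_eq_real_of_nat)
      then have "real k * c \<le> h" using h(2) by (simp add: ennreal_le_iff)
      moreover have "h < real k * c" using k c0 by (simp add: field_simps)
      ultimately show False by simp
    qed
  qed
qed

end
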